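(* Let $M \ge 1$ be an integer, let $q_1, \ldots, q_M \in [0,1]$, and let $\tau \ge 1$. Define \[ \chi(\gamma) = q_1 + \frac{q_2}{1!}\gamma + \frac{q_3}{2!}\gamma^2 + \cdots + \frac{q_M}{(M-1)!}\gamma^{M-1} \] and, for $\gamma \ge 0$, \[ f(\gamma) = \frac{\gamma\, \chi(\gamma)\, e^{-\gamma}}{e^{-\gamma} + \tau\left(1 - e^{-\gamma}\right)}. \] If $q_1 \le 2 q_2 \le 3 q_3 \le \cdots \le M q_M$, then $f$ is unimodal on $[0,\infty)$. In particular, $f$ is unimodal whenever $M \le 2$.
   Context: A function $f:[0,\infty)\to\mathbb{R}$ is called unimodal if it has a single maximum, i.e., there exists $\gamma^* \ge 0$ such that $f$ is nondecreasing on $[0,\gamma^*]$ and nonincreasing on $[\gamma^*,\infty)$. (Here $q_L$ is interpreted as the probability that all $L$ simultaneously transmitted packets are successfully decoded, and $\tau$ is the number of time slots in a busy period, but these interpretations are not needed for the statement.) *)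

theory Defs
  imports Complex_Main
begin

definition unimodal :: "(real \<Rightarrow> real) \<Rightarrow> bool" where
  "unimodal f \<longleftrightarrow> (\<exists>g\<ge>0.
      (\<forall>x y. 0 \<le> x \<and> x \<le> y \<and> y \<le> g \<longrightarrow> f x \<le> f y) \<and>
      (\<forall>x y. g \<le> x \<and> x \<le> y \<longrightarrow> f y \<le> f x))"

definition chi :: "nat \<Rightarrow> (nat \<Rightarrow> real) \<Rightarrow> real \<Rightarrow> real" where
  "chi M q \<gamma> = (\<Sum>k=1..M. q k / fact (k - 1) * \<gamma> ^ (k - 1))"

definition fthr :: "nat \<Rightarrow> (nat \<Rightarrow> real) \<Rightarrow> real \<Rightarrow> real \<Rightarrow> real" where
  "fthr M q \<tau> \<gamma> = \<gamma> * chi M q \<gamma> * exp (-\<gamma>) / (exp (-\<gamma>) + \<tau> * (1 - exp (-\<gamma>)))"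

end

theory Submission imports Defs begin

lemma incr_on:
  fixes F F' :: "real \<Rightarrow> real"
  assumes "x \<le> y" "continuous_on {x..y} F"
    and "\<And>z. x < z \<Longrightarrow> z < y \<Longrightarrow> (F has_real_derivative F' z) (at z) \<and> F' z \<ge> 0"
  shows "F x \<le> F y"
  using DERIV_nonneg_imp_increasing_open[of x y F] assms by blast

lemma decr_on:
  fixes F F' :: "real \<Rightarrow> real"
  assumes "x \<le> y" "continuous_on {x..y} F"
    and "\<And>z. x < z \<Longrightarrow> z < y \<Longrightarrow> (F has_real_derivative F' z) (at z) \<and> F' z \<le> 0"
  shows "F y \<le> F x"
  using DERIV_nonpos_imp_decreasing_open[of x y F] assms by blast

lemma L1:
  fixes F F' :: "real \<Rightarrow> real"
  assumes cont: "continuous_on {0..} F"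
    and der: "\<And>x. x > 0 \<Longrightarrow> (F has_real_derivative F' x) (at x)"
    and up: "\<And>x y. 0 < x \<Longrightarrow> x \<le> y \<Longrightarrow> F' x < 0 \<Longrightarrow> F' y \<le> 0"
    and F0: "F 0 \<ge> 0"
    and x: "0 \<le> x" "x \<le> y" "F x < 0"
  shows "F y \<le> 0"
proof (rule ccontr)
  assume Fy: "\<not> F y \<le> 0"
  have cs: "\<And>a b. 0 \<le> a \<Longrightarrow> continuous_on {a..b} F"
    using cont by (rule continuous_on_subset) auto
  show False
  proof (cases "\<exists>z. 0 < z \<and> z < x \<and> F' z < 0")
    case True
    then obtain z where z: "0 < z" "z < x" "F' z < 0" by blast
    have "F y \<le> F x"
      by (rule decr_on[of x y F F']) (use x z der up cs in auto)
    with x Fy show False by auto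
  next
    case False
    have nn: "\<And>z. 0 < z \<Longrightarrow> z < x \<Longrightarrow> F' z \<ge> 0" using False by force
    have "F 0 \<le> F x"
      by (rule incr_on[of 0 x F F']) (use x nn der cs in auto)
    with x F0 show False by auto
  qed
qed

lemma L2:
  fixes F F' :: "real \<Rightarrow> real"
  assumes cont: "continuous_on {0..} F"
    and der: "\<And>x. x > 0 \<Longrightarrow> (F has_real_derivative F' x) (at x)"
    and up: "\<And>x y. 0 < x \<Longrightarrow> x \<le> y \<Longrightarrow> F' x < 0 \<Longrightarrow> F' y \<le> 0"
    and ev: "x0 \<ge> 0" "\<And>y. y > x0 \<Longrightarrow> F' y \<le> 0"
  shows "unimodal F"
proof -
  have cs: "\<And>a b. 0 \<le> a \<Longrightarrow> continuous_on {a..b} F"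
    using cont by (rule continuous_on_subset) auto
  define S where "S = {x. x > 0 \<and> F' x < 0}"
  show ?thesis
  proof (cases "S = {}")
    case True
    show ?thesis unfolding unimodal_def
    proof (intro exI[of _ x0] conjI allI impI)
      fix x y assume a: "0 \<le> x \<and> x \<le> y \<and> y \<le> x0"
      have nn: "\<And>z. 0 < z \<Longrightarrow> F' z \<ge> 0" using True unfolding S_def by force
      show "F x \<le> F y"
        by (rule incr_on[of x y F F']) (use a nn der cs in auto)
    next
      fix x y assume a: "x0 \<le> x \<and> x \<le> y"
      show "F y \<le> F x"
        by (rule decr_on[of x y F F']) (use a ev der cs in \<open>auto\<close>)
    qed (use ev in auto)
  next
    case False
    have bdd: "bdd_below S" unfolding S_def by (rule bdd_belowI[of _ 0]) auto
    define g where "g = Inf S"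
    have g0: "g \<ge> 0" unfolding g_def using False by (intro cInf_greatest) (auto simp: S_def)
    show ?thesis unfolding unimodal_def
    proof (intro exI[of _ g] conjI allI impI g0)
      fix x y assume a: "0 \<le> x \<and> x \<le> y \<and> y \<le> g"
      have "\<And>z. x < z \<Longrightarrow> z < y \<Longrightarrow> F' z \<ge> 0"
      proof -
        fix z assume "x < z" "z < y"
        hence "z \<notin> S" using a cInf_lower[OF _ bdd, of z] unfolding g_def by force
        thus "F' z \<ge> 0" using \<open>x < z\<close> a by (auto simp: S_def)
      qed
      thus "F x \<le> F y"
        by (intro incr_on[of x y F F']) (use a der cs in auto)
    next
      fix x y assume a: "g \<le> x \<and> x \<le> y"
      have "\<And>z. x < z \<Longrightarrow> z < y \<Longrightarrow> F' z \<le> 0"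
      proof -
        fix z assume "x < z" "z < y"
        hence "Inf S < z" using a g_def by auto
        then obtain s where "s \<in> S" "s < z" using cInf_less_iff[OF False bdd] by auto
        thus "F' z \<le> 0" using up[of s z] by (auto simp: S_def)
      qed
      thus "F y \<le> F x"
        by (intro decr_on[of x y F F']) (use a g0 der cs in auto)
    qed
  qed
qed

lemma poly_sign:
  fixes w :: "nat \<Rightarrow> real"
  assumes w: "\<And>i. i < L \<Longrightarrow> w i \<ge> 0" and xy: "0 < x" "x \<le> y"
    and neg: "(\<Sum>i<L. w i * x^i) + W * x^L < 0"
  shows "(\<Sum>i<L. w i * y^i) + W * y^L \<le> 0"
proof -
  have "x^L * (\<Sum>i<L. w i * y^i) \<le> y^L * (\<Sum>i<L. w i * x^i)"
    unfolding sum_distrib_left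
  proof (rule sum_mono)
    fix i assume "i \<in> {..<L}"
    hence i: "i < L" by simp
    have xL: "x^L = x^i * x^(L-i)" and yL: "y^L = y^i * y^(L-i)"
      using i by (simp_all flip: power_add)
    have "x^(L-i) \<le> y^(L-i)" using xy by (intro power_mono) auto
    hence "(w i * y^i * x^i) * x^(L-i) \<le> (w i * y^i * x^i) * y^(L-i)"
      using w[OF i] xy by (intro mult_left_mono) auto
    thus "x ^ L * (w i * y ^ i) \<le> y ^ L * (w i * x ^ i)"
      unfolding xL yL by (simp add: algebra_simps)
  qed
  hence "x^L * ((\<Sum>i<L. w i * y^i) + W * y^L) \<le> y^L * ((\<Sum>i<L. w i * x^i) + W * x^L)"
    by (simp add: algebra_simps)
  also have "\<dots> < 0" using neg xy by (simp add: mult_pos_neg)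
  finally show ?thesis using xy
    by (metis linorder_not_le mult_pos_pos not_less_iff_gr_or_eq zero_less_power)
qed


definition rr :: "(nat \<Rightarrow> real) \<Rightarrow> nat \<Rightarrow> real" where
  "rr q j = q (Suc j) / fact j"
definition NN :: "nat \<Rightarrow> (nat \<Rightarrow> real) \<Rightarrow> real \<Rightarrow> real" where
  "NN M q y = (\<Sum>j<M. rr q j * y ^ Suc j)"
definition N1 :: "nat \<Rightarrow> (nat \<Rightarrow> real) \<Rightarrow> real \<Rightarrow> real" where
  "N1 M q y = (\<Sum>j<M. rr q j * real (Suc j) * y ^ j)"
definition N2 :: "nat \<Rightarrow> (nat \<Rightarrow> real) \<Rightarrow> real \<Rightarrow> real" where
  "N2 M q y = (\<Sum>j<M. rr q j * real (Suc j) * real j * y ^ (j - 1))"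
definition EE :: "real \<Rightarrow> real \<Rightarrow> real" where
  "EE \<tau> y = \<tau> - (\<tau> - 1) * exp (-y)"
definition PS :: "nat \<Rightarrow> (nat \<Rightarrow> real) \<Rightarrow> real \<Rightarrow> real \<Rightarrow> real" where
  "PS M q \<tau> y = (N1 M q y - NN M q y) * EE \<tau> y - (\<tau> - 1) * NN M q y * exp (-y)"

lemma chi_eq: "chi M q y = (\<Sum>j<M. rr q j * y ^ j)"
  unfolding chi_def rr_def
  by (simp add: sum.atLeast1_atMost_eq)

lemma fthr_eq: "fthr M q \<tau> y = NN M q y * exp (-y) / EE \<tau> y"
  unfolding fthr_def NN_def EE_def chi_eq
  by (simp add: sum_distrib_left algebra_simps)

lemma pow_aux: "0 < x \<Longrightarrow> y * y^(x - Suc 0) = (y::real)^x" by (cases x) auto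

lemma d_NN: "(NN M q has_real_derivative N1 M q y) (at y)"
  unfolding NN_def N1_def
  by (auto intro!: derivative_eq_intros sum.cong simp: algebra_simps pow_aux)

lemma d_N1: "(N1 M q has_real_derivative N2 M q y) (at y)"
  unfolding N2_def N1_def
  by (auto intro!: derivative_eq_intros sum.cong simp: algebra_simps pow_aux)

lemma EE_ge1: "\<tau> \<ge> 1 \<Longrightarrow> y \<ge> 0 \<Longrightarrow> EE \<tau> y \<ge> 1"
  unfolding EE_def
proof -
  assume a: "\<tau> \<ge> 1" "y \<ge> 0"
  have "exp (-y) \<le> 1" using a by simp
  hence "(\<tau> - 1) * exp (-y) \<le> (\<tau> - 1)" using a by (intro mult_left_le) auto
  thus "\<tau> - (\<tau> - 1) * exp (- y) \<ge> 1" by simp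
qed

lemma d_PS: "(PS M q \<tau> has_real_derivative (N2 M q y - N1 M q y) * EE \<tau> y) (at y)"
  unfolding PS_def EE_def
  by (rule derivative_eq_intros d_NN d_N1 refl | simp)+ (simp add: algebra_simps)

lemma d_f: "EE \<tau> y \<noteq> 0 \<Longrightarrow>
  ((\<lambda>y. NN M q y * exp (-y) / EE \<tau> y) has_real_derivative exp (-y) * PS M q \<tau> y / (EE \<tau> y)^2) (at y)"
  unfolding PS_def
  apply (rule derivative_eq_intros d_NN refl | simp)+
  unfolding EE_def
  apply (rule derivative_eq_intros refl | simp)+
  apply (simp add: field_simps power2_eq_square)
  done


lemma core:
  fixes M :: nat and q :: "nat \<Rightarrow> real" and \<tau> :: real
  assumes M: "M \<ge> 1"
    and qn: "\<forall>k\<in>{1..M}. 0 \<le> q k"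
    and tau: "\<tau> \<ge> 1"
    and up: "\<And>x y. 0 < x \<Longrightarrow> x \<le> y \<Longrightarrow> N2 M q x - N1 M q x < 0 \<Longrightarrow> N2 M q y - N1 M q y \<le> 0"
  shows "unimodal (fthr M q \<tau>)"
proof -
  have rr0: "\<And>j. j < M \<Longrightarrow> rr q j \<ge> 0" using qn unfolding rr_def by auto
  have NN0: "\<And>y. y \<ge> 0 \<Longrightarrow> NN M q y \<ge> 0" unfolding NN_def using rr0 by (auto intro!: sum_nonneg)
  have N10: "\<And>y. y \<ge> 0 \<Longrightarrow> N1 M q y \<ge> 0" unfolding N1_def using rr0 by (auto intro!: sum_nonneg)
  have E1: "\<And>y. y \<ge> 0 \<Longrightarrow> EE \<tau> y \<ge> 1" using EE_ge1 tau by auto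
  have PS0: "PS M q \<tau> 0 \<ge> 0"
    using N10[of 0] by (simp add: PS_def NN_def EE_def)
  have PScont: "continuous_on {0..} (PS M q \<tau>)"
    by (intro continuous_at_imp_continuous_on ballI DERIV_isCont[OF d_PS])
  have PSup: "\<And>x y. 0 \<le> x \<Longrightarrow> x \<le> y \<Longrightarrow> PS M q \<tau> x < 0 \<Longrightarrow> PS M q \<tau> y \<le> 0"
  proof -
    fix x y assume xy: "0 \<le> x" "x \<le> y" "PS M q \<tau> x < 0"
    show "PS M q \<tau> y \<le> 0"
    proof (rule L1[OF PScont d_PS _ PS0 xy])
      fix a b :: real assume ab: "0 < a" "a \<le> b" "(N2 M q a - N1 M q a) * EE \<tau> a < 0"
      have "EE \<tau> a > 0" "EE \<tau> b > 0" using E1[of a] E1[of b] ab by auto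
      hence "N2 M q a - N1 M q a < 0" using ab(3) by (simp add: mult_less_0_iff)
      hence "N2 M q b - N1 M q b \<le> 0" using up ab by blast
      thus "(N2 M q b - N1 M q b) * EE \<tau> b \<le> 0" using \<open>EE \<tau> b > 0\<close>
        by (simp add: mult_nonpos_nonneg)
    qed
  qed
  have feq: "fthr M q \<tau> = (\<lambda>y. NN M q y * exp (-y) / EE \<tau> y)"
    by (rule ext) (simp add: fthr_eq)
  have df: "\<And>y. y \<ge> 0 \<Longrightarrow> (fthr M q \<tau> has_real_derivative exp (-y) * PS M q \<tau> y / (EE \<tau> y)^2) (at y)"
    unfolding feq using E1 by (intro d_f) force
  have fcont: "continuous_on {0..} (fthr M q \<tau>)"
    by (intro continuous_at_imp_continuous_on ballI DERIV_isCont[OF df]) auto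
  have sgn: "\<And>y. y \<ge> 0 \<Longrightarrow> (exp (-y) * PS M q \<tau> y / (EE \<tau> y)^2 < 0 \<longleftrightarrow> PS M q \<tau> y < 0)"
  proof -
    fix y :: real assume "y \<ge> 0"
    hence "EE \<tau> y > 0" using E1 by force
    thus "(exp (-y) * PS M q \<tau> y / (EE \<tau> y)^2 < 0 \<longleftrightarrow> PS M q \<tau> y < 0)"
      by (simp add: divide_less_0_iff mult_less_0_iff)
  qed
  have ev: "\<And>y. y > real M \<Longrightarrow> PS M q \<tau> y \<le> 0"
  proof -
    fix y :: real assume y: "y > real M"
    hence y0: "y \<ge> 0" by simp
    have "N1 M q y \<le> NN M q y" unfolding N1_def NN_def
    proof (rule sum_mono)
      fix j assume "j \<in> {..<M}"
      hence j: "j < M" by simp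
      have "real (Suc j) \<le> y" using j y by linarith
      hence "real (Suc j) * y^j \<le> y * y^j" using y0 by (intro mult_right_mono) auto
      thus "rr q j * real (Suc j) * y ^ j \<le> rr q j * y ^ Suc j"
        using rr0[OF j] by (simp add: mult.assoc mult_left_mono)
    qed
    moreover have "EE \<tau> y > 0" using E1 y0 by force
    ultimately have "(N1 M q y - NN M q y) * EE \<tau> y \<le> 0" by (simp add: mult_nonpos_nonneg)
    moreover have "(\<tau> - 1) * NN M q y * exp (-y) \<ge> 0" using NN0[OF y0] tau by simp
    ultimately show "PS M q \<tau> y \<le> 0" unfolding PS_def by linarith
  qed
  show ?thesis
  proof (rule L2[OF fcont df])
    fix x y :: real assume xy: "0 < x" "x \<le> y" "exp (-x) * PS M q \<tau> x / (EE \<tau> x)^2 < 0"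
    hence "PS M q \<tau> x < 0" using sgn by auto
    hence "PS M q \<tau> y \<le> 0" using PSup[of x y] xy by auto
    thus "exp (-y) * PS M q \<tau> y / (EE \<tau> y)^2 \<le> 0"
      using sgn[of y] xy by (auto simp: not_less[symmetric])
  next
    fix y :: real assume "real M < y"
    thus "exp (-y) * PS M q \<tau> y / (EE \<tau> y)^2 \<le> 0"
      using ev[of y] by (intro divide_nonpos_nonneg mult_nonneg_nonpos) auto
  qed auto
qed


lemma a1_eq:
  assumes "M = Suc L"
  shows "N2 M q y - N1 M q y =
    (\<Sum>i<L. (rr q (Suc i) * real (Suc (Suc i)) * real (Suc i) - rr q i * real (Suc i)) * y^i)
      + (- rr q L * real (Suc L)) * y^L"
proof -
  have "N2 M q y = (\<Sum>i<L. rr q (Suc i) * real (Suc (Suc i)) * real (Suc i) * y^i)"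
    unfolding assms N2_def by (subst sum.lessThan_Suc_shift) simp
  moreover have "N1 M q y = (\<Sum>i<L. rr q i * real (Suc i) * y^i) + rr q L * real (Suc L) * y^L"
    unfolding assms N1_def by (subst sum.lessThan_Suc) simp
  ultimately show ?thesis by (simp add: sum_subtractf[symmetric] algebra_simps)
qed

lemma w_eq: "rr q (Suc i) * real (Suc (Suc i)) * real (Suc i) - rr q i * real (Suc i)
   = (real (Suc (Suc i)) * q (Suc (Suc i)) - real (Suc i) * q (Suc i)) / fact i"
proof -
  have f: "fact i > (0::real)" by simp
  have "rr q (Suc i) * real (Suc (Suc i)) * real (Suc i) = q (Suc (Suc i)) * real (Suc (Suc i)) / fact i"
  proof -
    have "rr q (Suc i) * real (Suc i) = q (Suc (Suc i)) / fact i"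
      unfolding rr_def fact_Suc by (simp del: of_nat_Suc)
    thus ?thesis by (metis mult.commute mult.left_commute times_divide_eq_right)
  qed
  moreover have "rr q i * real (Suc i) = q (Suc i) * real (Suc i) / fact i" unfolding rr_def by simp
  ultimately show ?thesis by (simp add: diff_divide_distrib algebra_simps)
qed

theorem lemma1:
  fixes M :: nat and q :: "nat \<Rightarrow> real" and \<tau> :: real
  assumes "M \<ge> 1"
    and "\<forall>k\<in>{1..M}. 0 \<le> q k \<and> q k \<le> 1"
    and "\<tau> \<ge> 1"
  shows "((\<forall>k\<in>{1..<M}. real k * q k \<le> real (k + 1) * q (k + 1)) \<longrightarrow> unimodal (fthr M q \<tau>))
         \<and> (M \<le> 2 \<longrightarrow> unimodal (fthr M q \<tau>))"
proof -
  have qn: "\<forall>k\<in>{1..M}. 0 \<le> q k" using assms(2) by auto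
  obtain L where L: "M = Suc L" using assms(1) by (cases M) auto
  have P1: "unimodal (fthr M q \<tau>)" if cond: "\<forall>k\<in>{1..<M}. real k * q k \<le> real (k + 1) * q (k + 1)"
  proof (rule core[OF assms(1) qn assms(3)])
    fix x y :: real assume xy: "0 < x" "x \<le> y" "N2 M q x - N1 M q x < 0"
    have w: "\<And>i. i < L \<Longrightarrow> rr q (Suc i) * real (Suc (Suc i)) * real (Suc i) - rr q i * real (Suc i) \<ge> 0"
    proof -
      fix i assume "i < L"
      hence "Suc i \<in> {1..<M}" using L by auto
      hence "real (Suc i) * q (Suc i) \<le> real (Suc i + 1) * q (Suc i + 1)" using cond by blast
      hence "real (Suc i) * q (Suc i) \<le> real (Suc (Suc i)) * q (Suc (Suc i))" by simp
      thus "rr q (Suc i) * real (Suc (Suc i)) * real (Suc i) - rr q i * real (Suc i) \<ge> 0"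
        unfolding w_eq by simp
    qed
    have neg: "(\<Sum>i<L. (rr q (Suc i) * real (Suc (Suc i)) * real (Suc i) - rr q i * real (Suc i)) * x^i)
      + (- rr q L * real (Suc L)) * x^L < 0"
      using xy(3) a1_eq[OF L, of q x] by simp
    show "N2 M q y - N1 M q y \<le> 0"
      using poly_sign[OF w xy(1,2) neg] a1_eq[OF L, of q y] by simp
  qed
  have P2: "unimodal (fthr M q \<tau>)" if M2: "M \<le> 2"
  proof (cases "M = 1")
    case True
    thus ?thesis using P1 by auto
  next
    case False
    hence M2': "M = 2" using M2 assms(1) by auto
    have r1: "rr q 1 \<ge> 0" using qn M2' by (auto simp: rr_def)
    show ?thesis
    proof (rule core[OF assms(1) qn assms(3)])
      fix x y :: real assume xy: "0 < x" "x \<le> y" "N2 M q x - N1 M q x < 0"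
      have M1: "M = Suc 1" using M2' by simp
      have "rr q 1 * 2 * x \<le> rr q 1 * 2 * y" using r1 xy by (simp add: mult_left_mono)
      hence "N2 M q y - N1 M q y \<le> N2 M q x - N1 M q x"
        using a1_eq[OF M1, of q x] a1_eq[OF M1, of q y] by simp
      thus "N2 M q y - N1 M q y \<le> 0" using xy by simp
    qed
  qed
  show ?thesis using P1 P2 by blast
qed

end
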